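(* Let $n\in\mathbb{N}$ and let $\underline{\Delta},\tilde{\Delta}:\{k\in\mathbb{N}_0^{\{0,1\}^2}:k_{++}=n\}\to[-1,1]$ be two lower confidence bounds for the parameter $q\mapsto q_{01}-q_{10}$ in the multinomial model $\mathcal{M}:=(\mathrm{M}_{n,q}:q\in\mathrm{prob}(\{0,1\}^2))$ which are equivalent, i.e. $\mathrm{M}_{n,q}(\tilde{\Delta}\ge t)=\mathrm{M}_{n,q}(\underline{\Delta}\ge t)$ for all $q\in\mathrm{prob}(\{0,1\}^2)$ and all $t<q_{01}-q_{10}$. Then $\underline{\Delta}=\tilde{\Delta}$.
   Context: $\mathrm{prob}(\{0,1\}^2)$ is the set of probability densities on $\{0,1\}^2$; $\mathrm{M}_{n,q}$ is the multinomial distribution with sample size $n$ and probability vector $q$; $k_{++}=\sum_{i,j\in\{0,1\}}k_{ij}$. A lower $\beta$-confidence bound for a parameter $\kappa$ in a model $(P_\theta)$ is a function $\underline{\kappa}$ with $P_\theta(\underline{\kappa}\le\kappa(\theta))\ge\beta$ for all $\theta$ (here for some fixed $\beta\in[0,1]$). *)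

theory Defs
  imports Complex_Main
begin

text \<open>Index set {0,1}^2 is rendered as bool \<times> bool, with False = 0 and True = 1.
  So q_01 = q (False, True) and q_10 = q (True, False).\<close>

definition kspace :: "nat \<Rightarrow> (bool \<times> bool \<Rightarrow> nat) set" where
  "kspace n = {k. (\<Sum>ij\<in>UNIV. k ij) = n}"

definition probs :: "(bool \<times> bool \<Rightarrow> real) set" where
  "probs = {q. (\<forall>ij. 0 \<le> q ij) \<and> (\<Sum>ij\<in>UNIV. q ij) = 1}"

definition mult_dens :: "nat \<Rightarrow> (bool \<times> bool \<Rightarrow> real) \<Rightarrow> (bool \<times> bool \<Rightarrow> nat) \<Rightarrow> real" where
  "mult_dens n q k = fact n / (\<Prod>ij\<in>UNIV. fact (k ij)) * (\<Prod>ij\<in>UNIV. q ij ^ k ij)"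

definition mult_prob :: "nat \<Rightarrow> (bool \<times> bool \<Rightarrow> real) \<Rightarrow> (bool \<times> bool \<Rightarrow> nat) set \<Rightarrow> real" where
  "mult_prob n q A = (\<Sum>k\<in>kspace n \<inter> A. mult_dens n q k)"

definition Delta :: "(bool \<times> bool \<Rightarrow> real) \<Rightarrow> real" where
  "Delta q = q (False, True) - q (True, False)"

definition lower_conf_bound ::
  "nat \<Rightarrow> real \<Rightarrow> ((bool \<times> bool \<Rightarrow> real) \<Rightarrow> real) \<Rightarrow> ((bool \<times> bool \<Rightarrow> nat) \<Rightarrow> real) \<Rightarrow> bool" where
  "lower_conf_bound n \<beta> \<kappa> L \<longleftrightarrow> (\<forall>q\<in>probs. mult_prob n q {k. L k \<le> \<kappa> q} \<ge> \<beta>)"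

end

theory Submission
  imports Defs "HOL-Computational_Algebra.Polynomial" "HOL-Library.FuncSet"
begin

lemma UNIV_bb: "(UNIV :: (bool\<times>bool) set) = {(False,False),(False,True),(True,False),(True,True)}"
  by (auto simp: UNIV_bool)

lemma sum_bb: "(\<Sum>ij\<in>(UNIV :: (bool\<times>bool) set). f ij) = f (False,False) + f (False,True) + f (True,False) + f (True,True)"
  by (simp add: UNIV_bb add.assoc)

lemma prod_bb: "(\<Prod>ij\<in>(UNIV :: (bool\<times>bool) set). f ij) = f (False,False) * f (False,True) * f (True,False) * f (True,True)"
  by (simp add: UNIV_bb mult.assoc)

lemma digits:
  fixes a b c a' b' c' N :: nat
  assumes "a < N" "b < N" "a' < N" "b' < N" "a + N*b + N*N*c = a' + N*b' + N*N*c'"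
  shows "a = a' \<and> b = b' \<and> c = c'"
proof -
  have e1: "a + N*(b + N*c) = a' + N*(b' + N*c')" using assms(5) by (simp add: algebra_simps)
  have "(a + N*(b + N*c)) mod N = a" using assms(1) by simp
  moreover have "(a' + N*(b' + N*c')) mod N = a'" using assms(3) by simp
  ultimately have aa: "a = a'" using e1 by metis
  have "(a + N*(b + N*c)) div N = b + N*c" using assms(1) by simp
  moreover have "(a' + N*(b' + N*c')) div N = b' + N*c'" using assms(3) by simp
  ultimately have e2: "b + N*c = b' + N*c'" using e1 by metis
  have "(b + N*c) mod N = b" using assms(2) by simp
  moreover have "(b' + N*c') mod N = b'" using assms(4) by simp
  ultimately have bb: "b = b'" using e2 by metis
  have "(b + N*c) div N = c" using assms(2) by simp
  moreover have "(b' + N*c') div N = c'" using assms(4) by simp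
  ultimately have "c = c'" using e2 by metis
  with aa bb show ?thesis by simp
qed

lemma fin_kspace: "finite (kspace n)"
proof -
  have "kspace n \<subseteq> PiE UNIV (\<lambda>_. {..n})"
  proof
    fix k assume "k \<in> kspace n"
    hence s: "k (False,False) + k (False,True) + k (True,False) + k (True,True) = n"
      by (simp add: kspace_def sum_bb)
    have "k (a,b) \<le> n" for a b using s by (cases a; cases b) auto
    hence "k ij \<le> n" for ij by (cases ij) auto
    thus "k \<in> PiE UNIV (\<lambda>_. {..n})" by auto
  qed
  moreover have "finite (PiE (UNIV :: (bool\<times>bool) set) (\<lambda>_. {..n}))"
    by (rule finite_PiE) auto
  ultimately show ?thesis by (rule finite_subset)
qed


lemma key:
  fixes n :: nat and t :: real and A B :: "(bool\<times>bool\<Rightarrow>nat) set"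
  assumes t: "t < 1" and H: "\<forall>q\<in>probs. t < Delta q \<longrightarrow> mult_prob n q A = mult_prob n q B"
  shows "kspace n \<inter> A = kspace n \<inter> B"
proof -
  define N where "N = Suc n"
  define e where "e k = k(False,False) + N*k(True,False) + N*N*k(True,True)" for k :: "bool\<times>bool\<Rightarrow>nat"
  define w where "w k = (fact n / (\<Prod>ij\<in>UNIV. fact (k ij)) :: real)" for k :: "bool\<times>bool\<Rightarrow>nat"
  define c where "c k = w k * ((if k\<in>A then 1 else 0) - (if k\<in>B then 1 else 0))" for k
  define p where "p = (\<Sum>k\<in>kspace n. monom (c k) (e k))"
  define \<delta> where "\<delta> = min 1 ((1-t)/4)"
  have \<delta>pos: "\<delta> > 0" using t by (simp add: \<delta>_def)
  have fin: "finite (kspace n)" by (rule fin_kspace)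
  have roots: "poly p x = 0" if x: "x \<in> {0<..<\<delta>}" for x
  proof -
    define g where "g ij = (case ij of (False,False) \<Rightarrow> x | (False,True) \<Rightarrow> 1 | (True,False) \<Rightarrow> x^N | (True,True) \<Rightarrow> x^(N*N))" for ij
    define S where "S = x + 1 + x^N + x^(N*N)"
    define q where "q ij = g ij / S" for ij
    have x0: "0 < x" and x1: "x < 1" and x2: "x < (1-t)/4" using x by (auto simp: \<delta>_def)
    have xN: "x^N \<le> x" using power_decreasing[of 1 N x] x0 x1 by (simp add: N_def)
    have xNN: "x^(N*N) \<le> x" using power_decreasing[of 1 "N*N" x] x0 x1 by (simp add: N_def)
    have Spos: "S > 0" using x0 by (simp add: S_def add_pos_pos)
    have gs: "(\<Sum>ij\<in>UNIV. g ij) = S" by (simp add: sum_bb g_def S_def)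
    have qp: "q \<in> probs"
    proof -
      have "0 \<le> q ij" for ij using x0 Spos
        by (cases ij) (auto simp: q_def g_def split: bool.splits)
      moreover have "(\<Sum>ij\<in>UNIV. q ij) = 1" using Spos
        by (simp add: q_def sum_divide_distrib[symmetric] gs)
      ultimately show ?thesis by (simp add: probs_def)
    qed
    have dq: "t < Delta q"
    proof -
      have D: "Delta q = (1 - x^N) / S" by (simp add: Delta_def q_def g_def diff_divide_distrib)
      have "t * S < 1 - x^N"
      proof (cases "t \<le> 0")
        case True
        have "x^N < 1" using xN x1 by linarith
        moreover have "t * S \<le> 0" using True Spos by (simp add: mult_nonpos_nonneg)
        ultimately show ?thesis by linarith
      next
        case False
        have "S \<le> 1 + 3*x" using xN xNN by (simp add: S_def)
        hence "t * S \<le> t * (1 + 3*x)" using False by (simp add: mult_left_mono)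
        moreover have "x * (1 + 3*t) < 1 - t"
        proof -
          have "x * (1 + 3*t) \<le> x * 4" using t x0 by (intro mult_left_mono) auto
          moreover have "x * 4 < 1 - t" using x2 by simp
          ultimately show ?thesis by linarith
        qed
        ultimately show ?thesis using xN by (simp add: algebra_simps)
      qed
      thus ?thesis using D Spos by (simp add: pos_less_divide_eq)
    qed
    have md: "mult_dens n q k = w k * x^(e k) / S^n" if k: "k \<in> kspace n" for k
    proof -
      have ks: "(\<Sum>ij\<in>UNIV. k ij) = n" using k by (simp add: kspace_def)
      have "(\<Prod>ij\<in>UNIV. q ij ^ k ij) = (\<Prod>ij\<in>UNIV. g ij ^ k ij) / (\<Prod>ij\<in>UNIV. S ^ k ij)"
        by (simp add: q_def power_divide prod_dividef)
      also have "(\<Prod>ij\<in>UNIV. S ^ k ij) = S ^ n" using ks by (simp add: power_sum[symmetric])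
      also have "(\<Prod>ij\<in>UNIV. g ij ^ k ij) = x ^ e k"
        by (simp add: prod_bb g_def e_def power_add power_mult)
      finally show ?thesis by (simp add: mult_dens_def w_def)
    qed
    from H qp dq have "mult_prob n q A = mult_prob n q B" by blast
    hence "(\<Sum>k\<in>kspace n \<inter> A. w k * x^(e k) / S^n) = (\<Sum>k\<in>kspace n \<inter> B. w k * x^(e k) / S^n)"
      by (simp add: mult_prob_def md)
    hence E: "(\<Sum>k\<in>kspace n \<inter> A. w k * x^(e k)) = (\<Sum>k\<in>kspace n \<inter> B. w k * x^(e k))"
      using Spos by (simp add: sum_divide_distrib[symmetric])
    have "poly p x = (\<Sum>k\<in>kspace n. c k * x^(e k))"
      by (simp add: p_def poly_sum poly_monom)
    also have "\<dots> = (\<Sum>k\<in>kspace n. (if k \<in> A then w k * x^(e k) else 0)) - (\<Sum>k\<in>kspace n. (if k \<in> B then w k * x^(e k) else 0))"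
      by (simp add: c_def sum_subtractf[symmetric] algebra_simps) (rule sum.cong, auto)
    also have "\<dots> = 0" using E fin by (simp add: sum.inter_restrict)
    finally show ?thesis .
  qed
  have p0: "p = 0"
  proof (rule ccontr)
    assume "p \<noteq> 0"
    hence "finite {x. poly p x = 0}" by (rule poly_roots_finite)
    moreover have "{0<..<\<delta>} \<subseteq> {x. poly p x = 0}" using roots by auto
    ultimately have "finite {0<..<\<delta>}" by (rule finite_subset[rotated])
    thus False using infinite_Ioo[OF \<delta>pos] by simp
  qed
  have inj: "k = k'" if "k \<in> kspace n" "k' \<in> kspace n" "e k = e k'" for k k'
  proof -
    have s: "k (False,False) + k (False,True) + k (True,False) + k (True,True) = n"
      "k' (False,False) + k' (False,True) + k' (True,False) + k' (True,True) = n"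
      using that by (simp_all add: kspace_def sum_bb)
    have "k (False,False) = k' (False,False) \<and> k (True,False) = k' (True,False) \<and> k (True,True) = k' (True,True)"
      using that(3) s by (intro digits[of _ N]) (auto simp: e_def N_def)
    with s have "k (a,b) = k' (a,b)" for a b by (cases a; cases b) auto
    thus ?thesis by (intro ext) (metis prod.collapse)
  qed
  have ck: "c k = 0" if k: "k \<in> kspace n" for k
  proof -
    have "coeff p (e k) = (\<Sum>k'\<in>kspace n. if e k' = e k then c k' else 0)"
      by (simp add: p_def coeff_sum)
    also have "\<dots> = (\<Sum>k'\<in>kspace n. if k' = k then c k' else 0)"
      by (rule sum.cong) (use inj k in auto)
    also have "\<dots> = c k" using fin k by simp
    finally show ?thesis using p0 by simp
  qed
  have wpos: "w k > 0" for k by (simp add: w_def prod_pos)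
  show ?thesis
  proof (intro set_eqI iffI)
    fix k assume "k \<in> kspace n \<inter> A"
    with ck[of k] wpos[of k] show "k \<in> kspace n \<inter> B" by (auto simp: c_def split: if_splits)
  next
    fix k assume "k \<in> kspace n \<inter> B"
    with ck[of k] wpos[of k] show "k \<in> kspace n \<inter> A" by (auto simp: c_def split: if_splits)
  qed
qed


theorem lemma14:
  fixes n :: nat and \<beta> :: real
    and L L' :: "(bool \<times> bool \<Rightarrow> nat) \<Rightarrow> real"
  assumes "n \<ge> 1"
    and "0 \<le> \<beta>" and "\<beta> \<le> 1"
    and "\<forall>k\<in>kspace n. L k \<in> {-1..1}"
    and "\<forall>k\<in>kspace n. L' k \<in> {-1..1}"
    and "lower_conf_bound n \<beta> Delta L"
    and "lower_conf_bound n \<beta> Delta L'"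
    and "\<forall>q\<in>probs. \<forall>t. t < Delta q \<longrightarrow>
           mult_prob n q {k. L' k \<ge> t} = mult_prob n q {k. L k \<ge> t}"
  shows "\<forall>k\<in>kspace n. L k = L' k"
proof
  fix k assume k: "k \<in> kspace n"
  have S: "kspace n \<inter> {k. L' k \<ge> t} = kspace n \<inter> {k. L k \<ge> t}" if "t < 1" for t
    using key[OF that] assms(8) by blast
  show "L k = L' k"
  proof (rule ccontr)
    assume ne: "L k \<noteq> L' k"
    define t where "t = (L k + L' k) / 2"
    have b: "L k \<le> 1" "L' k \<le> 1" using assms(4,5) k by auto
    show False
    proof (cases "L k < L' k")
      case True
      hence "t < 1" "L' k \<ge> t" "\<not> L k \<ge> t" using b by (auto simp: t_def)
      thus False using S[of t] k by blast
    next
      case False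
      hence "t < 1" "L k \<ge> t" "\<not> L' k \<ge> t" using b ne by (auto simp: t_def)
      thus False using S[of t] k by blast
    qed
  qed
qed

end
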